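(* A pushout square in $\mathbf{MetCH_{sep}}$ all four of whose morphisms are embeddings is also a pullback square in $\mathbf{MetCH_{sep}}$.
   Context: A metric on a set $X$ is a map $d\colon X\times X\to[0,\infty]$ with $d(x,x)=0$ and $d(x,z)\le d(x,y)+d(y,z)$ (not necessarily symmetric, $\infty$ allowed); separated means $d(x,y)=0=d(y,x)$ implies $x=y$. A separated metric compact Hausdorff space is a compact Hausdorff space with a separated metric $d\colon X\times X\to[0,\infty]$ continuous with respect to the upper topology on $[0,\infty]$ (open sets $]u,\infty]$, plus $\emptyset$ and $[0,\infty]$). $\mathbf{MetCH_{sep}}$: these spaces with continuous non-expansive maps as morphisms. An embedding is an injective morphism $f$ with $d_X(x,y)=d_Y(f(x),f(y))$ for all $x,y$. *)

theory Defs
  imports "HOL-Analysis.Analysis"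
begin

text \<open>An object of MetCH_sep with points in type 'a is a pair (T, d): a topology T whose
  carrier is topspace T, and a (possibly asymmetric, possibly infinite) distance
  d with values in [0,\<infinity>] (ennreal).\<close>

type_synonym 'a metch = "'a topology \<times> ('a \<Rightarrow> 'a \<Rightarrow> ennreal)"

definition carrier_of :: "'a metch \<Rightarrow> 'a set" where
  "carrier_of A = topspace (fst A)"

text \<open>Continuity of d : X \<times> X \<rightarrow> [0,\<infinity>] w.r.t. the upper topology on [0,\<infinity>],
  whose open sets are \<emptyset>, [0,\<infinity>] and the intervals ]u,\<infinity>]:
  the preimage of every ]u,\<infinity>] is open in X \<times> X (the preimages of \<emptyset> and of the
  whole space are trivially open).\<close>

definition upper_continuous :: "'a topology \<Rightarrow> ('a \<Rightarrow> 'a \<Rightarrow> ennreal) \<Rightarrow> bool" where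
  "upper_continuous T d \<longleftrightarrow>
     (\<forall>u::ennreal. openin (prod_topology T T)
        {z \<in> topspace (prod_topology T T). u < d (fst z) (snd z)})"

definition is_metric_on :: "'a set \<Rightarrow> ('a \<Rightarrow> 'a \<Rightarrow> ennreal) \<Rightarrow> bool" where
  "is_metric_on S d \<longleftrightarrow>
     (\<forall>x\<in>S. d x x = 0) \<and> (\<forall>x\<in>S. \<forall>y\<in>S. \<forall>z\<in>S. d x z \<le> d x y + d y z)"

definition separated_on :: "'a set \<Rightarrow> ('a \<Rightarrow> 'a \<Rightarrow> ennreal) \<Rightarrow> bool" where
  "separated_on S d \<longleftrightarrow> (\<forall>x\<in>S. \<forall>y\<in>S. d x y = 0 \<and> d y x = 0 \<longrightarrow> x = y)"

definition MetCH_sep_obj :: "'a metch \<Rightarrow> bool" where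
  "MetCH_sep_obj A \<longleftrightarrow>
     compact_space (fst A) \<and> Hausdorff_space (fst A) \<and>
     is_metric_on (carrier_of A) (snd A) \<and> separated_on (carrier_of A) (snd A) \<and>
     upper_continuous (fst A) (snd A)"

definition MetCH_sep_mor :: "'a metch \<Rightarrow> 'b metch \<Rightarrow> ('a \<Rightarrow> 'b) \<Rightarrow> bool" where
  "MetCH_sep_mor A B f \<longleftrightarrow>
     MetCH_sep_obj A \<and> MetCH_sep_obj B \<and> continuous_map (fst A) (fst B) f \<and>
     (\<forall>x\<in>carrier_of A. \<forall>y\<in>carrier_of A. snd B (f x) (f y) \<le> snd A x y)"

definition MetCH_sep_embedding :: "'a metch \<Rightarrow> 'b metch \<Rightarrow> ('a \<Rightarrow> 'b) \<Rightarrow> bool" where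
  "MetCH_sep_embedding A B f \<longleftrightarrow>
     MetCH_sep_mor A B f \<and> inj_on f (carrier_of A) \<and>
     (\<forall>x\<in>carrier_of A. \<forall>y\<in>carrier_of A. snd A x y = snd B (f x) (f y))"

text \<open>A commutative square
      X --g1--> Y1
      |g2        |f1
      v          v
      Y2 --f2--> P
  Morphisms are identified when they agree on the carrier.\<close>

definition commuting_square ::
  "'x metch \<Rightarrow> 'y1 metch \<Rightarrow> 'y2 metch \<Rightarrow> 'p metch \<Rightarrow>
   ('x \<Rightarrow> 'y1) \<Rightarrow> ('x \<Rightarrow> 'y2) \<Rightarrow> ('y1 \<Rightarrow> 'p) \<Rightarrow> ('y2 \<Rightarrow> 'p) \<Rightarrow> bool" where
  "commuting_square X Y1 Y2 P g1 g2 f1 f2 \<longleftrightarrow>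
     MetCH_sep_mor X Y1 g1 \<and> MetCH_sep_mor X Y2 g2 \<and>
     MetCH_sep_mor Y1 P f1 \<and> MetCH_sep_mor Y2 P f2 \<and>
     (\<forall>x\<in>carrier_of X. f1 (g1 x) = f2 (g2 x))"

text \<open>Pushout property, tested against all objects Z whose points live in the type 'z.\<close>

definition is_pushout ::
  "'z itself \<Rightarrow> 'x metch \<Rightarrow> 'y1 metch \<Rightarrow> 'y2 metch \<Rightarrow> 'p metch \<Rightarrow>
   ('x \<Rightarrow> 'y1) \<Rightarrow> ('x \<Rightarrow> 'y2) \<Rightarrow> ('y1 \<Rightarrow> 'p) \<Rightarrow> ('y2 \<Rightarrow> 'p) \<Rightarrow> bool" where
  "is_pushout (_::'z itself) X Y1 Y2 P g1 g2 f1 f2 \<longleftrightarrow>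
     commuting_square X Y1 Y2 P g1 g2 f1 f2 \<and>
     (\<forall>(Z::'z metch) h1 h2.
        MetCH_sep_mor Y1 Z h1 \<and> MetCH_sep_mor Y2 Z h2 \<and>
        (\<forall>x\<in>carrier_of X. h1 (g1 x) = h2 (g2 x)) \<longrightarrow>
        (\<exists>u. MetCH_sep_mor P Z u \<and>
             (\<forall>y\<in>carrier_of Y1. u (f1 y) = h1 y) \<and>
             (\<forall>y\<in>carrier_of Y2. u (f2 y) = h2 y) \<and>
             (\<forall>v. MetCH_sep_mor P Z v \<and>
                  (\<forall>y\<in>carrier_of Y1. v (f1 y) = h1 y) \<and>
                  (\<forall>y\<in>carrier_of Y2. v (f2 y) = h2 y) \<longrightarrow>
                  (\<forall>p\<in>carrier_of P. v p = u p))))"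

text \<open>Pullback property, tested against all objects W whose points live in the type 'w.\<close>

definition is_pullback ::
  "'w itself \<Rightarrow> 'x metch \<Rightarrow> 'y1 metch \<Rightarrow> 'y2 metch \<Rightarrow> 'p metch \<Rightarrow>
   ('x \<Rightarrow> 'y1) \<Rightarrow> ('x \<Rightarrow> 'y2) \<Rightarrow> ('y1 \<Rightarrow> 'p) \<Rightarrow> ('y2 \<Rightarrow> 'p) \<Rightarrow> bool" where
  "is_pullback (_::'w itself) X Y1 Y2 P g1 g2 f1 f2 \<longleftrightarrow>
     commuting_square X Y1 Y2 P g1 g2 f1 f2 \<and>
     (\<forall>(W::'w metch) k1 k2.
        MetCH_sep_mor W Y1 k1 \<and> MetCH_sep_mor W Y2 k2 \<and>
        (\<forall>w\<in>carrier_of W. f1 (k1 w) = f2 (k2 w)) \<longrightarrow>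
        (\<exists>u. MetCH_sep_mor W X u \<and>
             (\<forall>w\<in>carrier_of W. g1 (u w) = k1 w) \<and>
             (\<forall>w\<in>carrier_of W. g2 (u w) = k2 w) \<and>
             (\<forall>v. MetCH_sep_mor W X v \<and>
                  (\<forall>w\<in>carrier_of W. g1 (v w) = k1 w) \<and>
                  (\<forall>w\<in>carrier_of W. g2 (v w) = k2 w) \<longrightarrow>
                  (\<forall>w\<in>carrier_of W. v w = u w))))"

end

theory Submission
  imports Defs
begin

definition lsc :: "'a topology \<Rightarrow> ('a \<Rightarrow> ennreal) \<Rightarrow> bool" where
  "lsc T F \<longleftrightarrow> (\<forall>u. openin T {t \<in> topspace T. u < F t})"

lemma split_lt:
  fixes u a c :: ennreal assumes "u < a + c" "0 < a" shows "\<exists>v<a. u < v + c"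
proof (cases "c = top")
  case True then show ?thesis using assms by (intro exI[of _ 0]) (auto simp: top_unique)
next
  case False
  show ?thesis
  proof (cases "u < c")
    case True then show ?thesis using assms by (intro exI[of _ 0]) auto
  next
    case nl: False
    have ct: "c < top" using False by (simp add: less_top)
    have cu: "c \<le> u" using nl by simp
    have "u - c < a" using assms(1) minus_less_iff_ennreal[OF ct cu] by simp
    then obtain v where v: "u - c < v" "v < a" using dense by blast
    have "u < v + c" using v(1) minus_less_iff_ennreal[OF ct cu] by simp
    then show ?thesis using v by blast
  qed
qed

lemma lsc_attain:
  assumes F: "lsc T F" and K: "compactin T K" "K \<noteq> {}"
  shows "\<exists>k\<in>K. F k = (INF t\<in>K. F t)"
proof (rule ccontr)
  let ?m = "INF t\<in>K. F t"
  assume "\<not> ?thesis"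
  then have gt: "\<And>k. k \<in> K \<Longrightarrow> ?m < F k" by (metis INF_lower order_le_imp_less_or_eq)
  let ?C = "(\<lambda>v. {t \<in> topspace T. v < F t}) ` {v. ?m < v}"
  have op: "\<forall>U\<in>?C. openin T U" using F unfolding lsc_def by auto
  have sub: "K \<subseteq> \<Union>?C"
  proof
    fix k assume k: "k \<in> K"
    then obtain v where "?m < v" "v < F k" using gt dense by blast
    moreover have "k \<in> topspace T" using k K(1) compactin_subset_topspace by blast
    ultimately show "k \<in> \<Union>?C" by blast
  qed
  have cov: "(\<forall>B\<in>?C. openin T B) \<and> K \<subseteq> \<Union>?C \<longrightarrow> (\<exists>D. finite D \<and> D \<subseteq> ?C \<and> K \<subseteq> \<Union>D)"
    using K(1) unfolding compactin_def by (elim conjE) (erule spec)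
  obtain D where D: "finite D" "D \<subseteq> ?C" "K \<subseteq> \<Union>D"
    using cov op sub by blast
  obtain V where V: "V \<subseteq> {v. ?m < v}" "finite V" "D = (\<lambda>v. {t \<in> topspace T. v < F t}) ` V"
    using finite_subset_image[OF D(1) D(2)] by blast
  have "V \<noteq> {}" using V D K by auto
  let ?v = "Min V"
  have "?m < ?v" using V \<open>V \<noteq> {}\<close> by auto
  moreover have "?v \<le> ?m"
  proof (rule INF_greatest)
    fix k assume "k \<in> K"
    then obtain v where "v \<in> V" "v < F k" using D V by auto
    then show "?v \<le> F k" using V Min_le less_imp_le order_trans by metis
  qed
  ultimately show False by simp
qed

lemma lsc_add:
  assumes F: "lsc T F" and G: "lsc T G" shows "lsc T (\<lambda>t. F t + G t)"
  unfolding lsc_def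
proof
  fix u
  show "openin T {t \<in> topspace T. u < F t + G t}"
  proof (subst openin_subopen, intro ballI)
    fix t assume t: "t \<in> {t \<in> topspace T. u < F t + G t}"
    show "\<exists>U. openin T U \<and> t \<in> U \<and> U \<subseteq> {t \<in> topspace T. u < F t + G t}"
    proof (cases "F t = 0")
      case True
      then have "u < G t" using t by auto
      moreover have "{t \<in> topspace T. u < G t} \<subseteq> {t \<in> topspace T. u < F t + G t}"
      proof
        fix s assume s: "s \<in> {t \<in> topspace T. u < G t}"
        have "G s \<le> F s + G s" by (simp add: add_increasing)
        moreover have "u < G s" using s by simp
        ultimately have "u < F s + G s" by (metis less_le_trans)
        then show "s \<in> {t \<in> topspace T. u < F t + G t}" using s by simp
      qed
      ultimately show ?thesis using G t unfolding lsc_def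
        by (intro exI[of _ "{t \<in> topspace T. u < G t}"]) auto
    next
      case F0: False
      show ?thesis
      proof (cases "G t = 0")
        case True
        then have "u < F t" using t by auto
        moreover have "{t \<in> topspace T. u < F t} \<subseteq> {t \<in> topspace T. u < F t + G t}"
        proof
          fix s assume s: "s \<in> {t \<in> topspace T. u < F t}"
          have "F s \<le> F s + G s" by (simp add: add_increasing2)
          moreover have "u < F s" using s by simp
          ultimately have "u < F s + G s" by (metis less_le_trans)
          then show "s \<in> {t \<in> topspace T. u < F t + G t}" using s by simp
        qed
        ultimately show ?thesis using F t unfolding lsc_def
          by (intro exI[of _ "{t \<in> topspace T. u < F t}"]) auto
      next
        case G0: False
        have "0 < F t" using F0 by (simp add: zero_less_iff_neq_zero)
        then obtain v where v: "v < F t" "u < v + G t" using split_lt[of u "F t" "G t"] t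
          by blast
        have "0 < G t" using G0 by (simp add: zero_less_iff_neq_zero)
        moreover have "u < G t + v" using v(2) by (simp add: add.commute)
        ultimately obtain w where w: "w < G t" "u < w + v" using split_lt[of u "G t" v]
          by blast
        let ?U = "{t \<in> topspace T. v < F t} \<inter> {t \<in> topspace T. w < G t}"
        have "openin T ?U" using F G unfolding lsc_def by auto
        moreover have "?U \<subseteq> {t \<in> topspace T. u < F t + G t}"
        proof
          fix s assume s: "s \<in> ?U"
          then have "w \<le> G s" "v \<le> F s" by auto
          then have "w + v \<le> F s + G s" by (metis add_mono add.commute)
          then have "u < F s + G s" using w(2) by (rule less_le_trans[rotated])
          then show "s \<in> {t \<in> topspace T. u < F t + G t}" using s by blast
        qed
        moreover have "t \<in> ?U" using v w t by blast
        ultimately show ?thesis by blast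
      qed
    qed
  qed
qed

lemma lsc_comp:
  assumes "lsc S F" "continuous_map T S g" shows "lsc T (\<lambda>t. F (g t))"
  unfolding lsc_def
proof
  fix u
  have "{t \<in> topspace T. u < F (g t)} = {t \<in> topspace T. g t \<in> {s \<in> topspace S. u < F s}}"
    using assms(2) by (auto simp: continuous_map_def)
  moreover have "openin T {t \<in> topspace T. g t \<in> {s \<in> topspace S. u < F s}}"
    by (rule openin_continuous_map_preimage[OF assms(2)]) (use assms(1) in \<open>simp add: lsc_def\<close>)
  ultimately show "openin T {t \<in> topspace T. u < F (g t)}" by simp
qed

lemma lsc_closed:
  assumes "lsc T F" shows "closedin T {t \<in> topspace T. F t \<le> u}"
proof -
  have "{t \<in> topspace T. F t \<le> u} = topspace T - {t \<in> topspace T. u < F t}" by auto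
  then show ?thesis using assms unfolding lsc_def by (metis closedin_diff closedin_topspace)
qed

lemma upper_continuous_lsc:
  "upper_continuous T d \<longleftrightarrow> lsc (prod_topology T T) (\<lambda>z. d (fst z) (snd z))"
  unfolding upper_continuous_def lsc_def ..

lemma Hausdorff_pullback:
  assumes H: "Hausdorff_space T" and inj: "inj_on e A"
  shows "Hausdorff_space (pullback_topology A e T)"
  unfolding Hausdorff_space_def
proof (intro allI impI)
  fix x y assume xy: "x \<in> topspace (pullback_topology A e T) \<and> y \<in> topspace (pullback_topology A e T) \<and> x \<noteq> y"
  then have xA: "x \<in> A" "y \<in> A" "e x \<in> topspace T" "e y \<in> topspace T" by (auto simp: topspace_pullback_topology)
  then have "e x \<noteq> e y" using inj xy by (meson inj_onD)
  then obtain U V where UV: "openin T U" "openin T V" "e x \<in> U" "e y \<in> V" "disjnt U V"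
    using H xA(3,4) unfolding Hausdorff_space_def by metis
  have o1: "openin (pullback_topology A e T) (e -` U \<inter> A)"
    unfolding openin_pullback_topology using UV(1) by blast
  have o2: "openin (pullback_topology A e T) (e -` V \<inter> A)"
    unfolding openin_pullback_topology using UV(2) by blast
  have d: "disjnt (e -` U \<inter> A) (e -` V \<inter> A)" using UV(5) by (auto simp: disjnt_def)
  show "\<exists>U V. openin (pullback_topology A e T) U \<and> openin (pullback_topology A e T) V \<and>
           x \<in> U \<and> y \<in> V \<and> disjnt U V"
    using o1 o2 d UV(3,4) xA(1,2) by blast
qed

lemma ennreal_INF_add_const_set:
  fixes f :: "'a \<Rightarrow> ennreal"
  assumes "I \<noteq> {}"
  shows "(INF i\<in>I. f i + c) = (INF i\<in>I. f i) + c"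
  using continuous_at_Inf_mono[of "\<lambda>x. x + c" "f`I"]
  using continuous_add[of "at_right (Inf (f`I))", of "\<lambda>x. x" "\<lambda>x. c"] assms
  by (auto simp: mono_def image_comp)

lemma ennreal_const_add_INF_set:
  fixes f :: "'a \<Rightarrow> ennreal"
  assumes "I \<noteq> {}"
  shows "(INF i\<in>I. c + f i) = c + (INF i\<in>I. f i)"
  using ennreal_INF_add_const_set[OF assms, of f c] by (simp add: ac_simps)

locale amal =
  fixes X :: "'x metch" and Y1 :: "'y1 metch" and Y2 :: "'y2 metch" and P :: "'p metch"
    and g1 :: "'x \<Rightarrow> 'y1" and g2 :: "'x \<Rightarrow> 'y2" and f1 :: "'y1 \<Rightarrow> 'p" and f2 :: "'y2 \<Rightarrow> 'p"
  assumes e1: "MetCH_sep_embedding X Y1 g1" and e2: "MetCH_sep_embedding X Y2 g2"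
    and e3: "MetCH_sep_embedding Y1 P f1" and e4: "MetCH_sep_embedding Y2 P f2"
    and comm: "\<And>x. x \<in> carrier_of X \<Longrightarrow> f1 (g1 x) = f2 (g2 x)"
begin

abbreviation "XC \<equiv> carrier_of X"
abbreviation "Y1C \<equiv> carrier_of Y1"
abbreviation "Y2C \<equiv> carrier_of Y2"
abbreviation "PC \<equiv> carrier_of P"
abbreviation "dP \<equiv> snd P"

lemma objs: "MetCH_sep_obj X" "MetCH_sep_obj Y1" "MetCH_sep_obj Y2" "MetCH_sep_obj P"
  using e1 e2 e3 unfolding MetCH_sep_embedding_def MetCH_sep_mor_def by auto

lemma conts: "continuous_map (fst X) (fst Y1) g1" "continuous_map (fst X) (fst Y2) g2"
  "continuous_map (fst Y1) (fst P) f1" "continuous_map (fst Y2) (fst P) f2"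
  using e1 e2 e3 e4 unfolding MetCH_sep_embedding_def MetCH_sep_mor_def by auto

lemma injs: "inj_on g1 XC" "inj_on g2 XC" "inj_on f1 Y1C" "inj_on f2 Y2C"
  using e1 e2 e3 e4 unfolding MetCH_sep_embedding_def by auto

lemma isos:
  "\<And>x y. x \<in> XC \<Longrightarrow> y \<in> XC \<Longrightarrow> snd X x y = snd Y1 (g1 x) (g1 y)"
  "\<And>x y. x \<in> XC \<Longrightarrow> y \<in> XC \<Longrightarrow> snd X x y = snd Y2 (g2 x) (g2 y)"
  "\<And>x y. x \<in> Y1C \<Longrightarrow> y \<in> Y1C \<Longrightarrow> snd Y1 x y = dP (f1 x) (f1 y)"
  "\<And>x y. x \<in> Y2C \<Longrightarrow> y \<in> Y2C \<Longrightarrow> snd Y2 x y = dP (f2 x) (f2 y)"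
  using e1 e2 e3 e4 unfolding MetCH_sep_embedding_def by auto

lemma maps_in:
  "\<And>x. x \<in> XC \<Longrightarrow> g1 x \<in> Y1C" "\<And>x. x \<in> XC \<Longrightarrow> g2 x \<in> Y2C"
  "\<And>x. x \<in> Y1C \<Longrightarrow> f1 x \<in> PC" "\<And>x. x \<in> Y2C \<Longrightarrow> f2 x \<in> PC"
  using conts continuous_map_image_subset_topspace unfolding carrier_of_def by blast+

lemma cpt: "compact_space (fst X)" "compact_space (fst Y1)" "compact_space (fst Y2)" "compact_space (fst P)"
  using objs unfolding MetCH_sep_obj_def by auto

lemma haus: "Hausdorff_space (fst X)" "Hausdorff_space (fst Y1)" "Hausdorff_space (fst Y2)" "Hausdorff_space (fst P)"
  using objs unfolding MetCH_sep_obj_def by auto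

lemma ucs: "upper_continuous (fst X) (snd X)" "upper_continuous (fst Y1) (snd Y1)"
   "upper_continuous (fst Y2) (snd Y2)" "upper_continuous (fst P) dP"
  using objs unfolding MetCH_sep_obj_def by auto

lemma dP_refl: "p \<in> PC \<Longrightarrow> dP p p = 0"
  using objs(4) unfolding MetCH_sep_obj_def is_metric_on_def by auto

lemma dP_tri: "p \<in> PC \<Longrightarrow> q \<in> PC \<Longrightarrow> r \<in> PC \<Longrightarrow> dP p r \<le> dP p q + dP q r"
  using objs(4) unfolding MetCH_sep_obj_def is_metric_on_def by auto

lemma dP_sep: "p \<in> PC \<Longrightarrow> q \<in> PC \<Longrightarrow> dP p q = 0 \<Longrightarrow> dP q p = 0 \<Longrightarrow> p = q"
  using objs(4) unfolding MetCH_sep_obj_def separated_on_def by auto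

lemma lsc_dP_left: "p \<in> PC \<Longrightarrow> lsc (fst P) (\<lambda>r. dP p r)"
proof -
  assume p: "p \<in> PC"
  have "continuous_map (fst P) (prod_topology (fst P) (fst P)) (\<lambda>r. (p, r))"
    using p by (intro continuous_map_pairedI continuous_map_id) (auto simp: carrier_of_def)
  from lsc_comp[OF ucs(4)[unfolded upper_continuous_lsc] this] show ?thesis by simp
qed

lemma lsc_dP_right: "q \<in> PC \<Longrightarrow> lsc (fst P) (\<lambda>r. dP r q)"
proof -
  assume q: "q \<in> PC"
  have "continuous_map (fst P) (prod_topology (fst P) (fst P)) (\<lambda>r. (r, q))"
    using q by (intro continuous_map_pairedI continuous_map_id) (auto simp: carrier_of_def)
  from lsc_comp[OF ucs(4)[unfolded upper_continuous_lsc] this] show ?thesis by simp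
qed

definition "R = (\<lambda>x. f1 (g1 x)) ` XC"

lemma R_sub: "R \<subseteq> PC" using maps_in unfolding R_def by auto

lemma R_alt: "x \<in> XC \<Longrightarrow> f2 (g2 x) \<in> R" "x \<in> XC \<Longrightarrow> f1 (g1 x) \<in> R"
  using comm unfolding R_def by auto

lemma R_cpt: "compactin (fst P) R"
proof -
  have "continuous_map (fst X) (fst P) (f1 \<circ> g1)" using conts continuous_map_compose by blast
  then have "compactin (fst P) ((f1 \<circ> g1) ` topspace (fst X))"
    by (rule image_compactin[OF cpt(1)[unfolded compact_space_def]])
  then show ?thesis by (simp add: R_def carrier_of_def o_def)
qed

definition "Dl p q = (INF r\<in>R. dP p r + dP r q)"

lemma Dl_le: "r \<in> R \<Longrightarrow> Dl p q \<le> dP p r + dP r q"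
  unfolding Dl_def by (rule INF_lower)

lemma Dl_ge: "p \<in> PC \<Longrightarrow> q \<in> PC \<Longrightarrow> dP p q \<le> Dl p q"
  unfolding Dl_def using R_sub dP_tri by (intro INF_greatest) auto

lemma Dl_R: assumes "p \<in> PC" "q \<in> PC" "p \<in> R \<or> q \<in> R" shows "Dl p q = dP p q"
proof (rule antisym)
  show "dP p q \<le> Dl p q" using Dl_ge assms by auto
  show "Dl p q \<le> dP p q"
    using assms(3)
  proof
    assume "p \<in> R" then show ?thesis using Dl_le[of p p q] dP_refl assms by auto
  next
    assume "q \<in> R" then show ?thesis using Dl_le[of q p q] dP_refl assms by auto
  qed
qed

lemma Dl_empty: "R = {} \<Longrightarrow> Dl p q = top"
  unfolding Dl_def by simp

lemma T1: assumes "p \<in> PC" "w \<in> PC" "q \<in> PC" shows "Dl p q \<le> dP p w + Dl w q"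
proof (cases "R = {}")
  case True then show ?thesis by (simp add: Dl_empty)
next
  case False
  have "Dl p q \<le> (INF r\<in>R. dP p w + (dP w r + dP r q))"
  proof (rule INF_greatest)
    fix r assume r: "r \<in> R"
    have "Dl p q \<le> dP p r + dP r q" by (rule Dl_le[OF r])
    also have "\<dots> \<le> (dP p w + dP w r) + dP r q"
      using dP_tri[of p w r] assms r R_sub by (intro add_right_mono) auto
    finally show "Dl p q \<le> dP p w + (dP w r + dP r q)" by (simp add: add.assoc)
  qed
  also have "\<dots> = dP p w + Dl w q"
    unfolding Dl_def using ennreal_const_add_INF_set[OF False, of "dP p w" "\<lambda>r. dP w r + dP r q"] by simp
  finally show ?thesis .
qed

lemma T2: assumes "p \<in> PC" "w \<in> PC" "q \<in> PC" shows "Dl p q \<le> Dl p w + dP w q"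
proof (cases "R = {}")
  case True then show ?thesis by (simp add: Dl_empty)
next
  case False
  have "Dl p q \<le> (INF r\<in>R. dP w q + (dP p r + dP r w))"
  proof (rule INF_greatest)
    fix r assume r: "r \<in> R"
    have "Dl p q \<le> dP p r + dP r q" by (rule Dl_le[OF r])
    also have "\<dots> \<le> dP p r + (dP r w + dP w q)"
      using dP_tri[of r w q] assms r R_sub by (intro add_left_mono) auto
    finally show "Dl p q \<le> dP w q + (dP p r + dP r w)" by (simp add: ac_simps)
  qed
  also have "\<dots> = dP w q + Dl p w"
    unfolding Dl_def using ennreal_const_add_INF_set[OF False, of "dP w q" "\<lambda>r. dP p r + dP r w"] by simp
  finally show ?thesis by (simp add: add.commute)
qed

lemma T3: assumes "p \<in> PC" "w \<in> PC" "q \<in> PC" shows "dP p q \<le> Dl p w + Dl w q"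
proof -
  have "dP p q \<le> dP p w + dP w q" using dP_tri assms by auto
  also have "\<dots> \<le> Dl p w + Dl w q" using Dl_ge assms by (intro add_mono) auto
  finally show ?thesis .
qed

lemma Dl_attain:
  assumes "p \<in> PC" "q \<in> PC" "R \<noteq> {}" shows "\<exists>r\<in>R. Dl p q = dP p r + dP r q"
proof -
  have "lsc (fst P) (\<lambda>r. dP p r + dP r q)"
    using lsc_add lsc_dP_left lsc_dP_right assms by blast
  from lsc_attain[OF this R_cpt assms(3)] obtain r where
    "r \<in> R" "dP p r + dP r q = (INF r\<in>R. dP p r + dP r q)" by blast
  then show ?thesis unfolding Dl_def by metis
qed

lemma Dl_sep:
  assumes p: "p \<in> PC" and q: "q \<in> PC" and z: "Dl p q = 0" "Dl q p = 0"
  shows "p = q \<and> p \<in> R"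
proof -
  have "R \<noteq> {}" using z Dl_empty by auto
  then obtain r r' where r: "r \<in> R" "Dl p q = dP p r + dP r q"
    and r': "r' \<in> R" "Dl q p = dP q r' + dP r' p"
    using Dl_attain p q by metis
  have rP: "r \<in> PC" "r' \<in> PC" using r r' R_sub by auto
  have a: "dP p r = 0" "dP r q = 0" "dP q r' = 0" "dP r' p = 0" using r r' z by auto
  have "dP r r' \<le> dP r q + dP q r'" using dP_tri rP q by auto
  then have b: "dP r r' = 0" using a by simp
  have "dP r' r \<le> dP r' p + dP p r" using dP_tri rP p by auto
  then have c: "dP r' r = 0" using a by simp
  have "r = r'" using dP_sep[OF rP b c] .
  then have "p = r" "q = r" using dP_sep rP p q a by metis+
  then show ?thesis using r by auto
qed

end

context amal begin

definition "Psi = {\<psi>. continuous_map (fst Y2) euclideanreal \<psi> \<and> (\<forall>x\<in>XC. \<psi> (g2 x) = 0)}"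
definition "piZ z = case_sum f1 f2 z"
definition "eZ z = (piZ z, (\<lambda>\<psi>. case z of Inl a \<Rightarrow> 0 | Inr b \<Rightarrow> if \<psi> \<in> Psi then \<psi> b else (0::real)))"
definition "AZ = Inl ` Y1C \<union> Inr ` (Y2C - g2 ` XC)"
definition "TT = prod_topology (fst P) (product_topology (\<lambda>_::'y2 \<Rightarrow> real. euclideanreal) UNIV)"
definition "TZ = pullback_topology AZ eZ TT"
definition "DZ z z' = (if isl z = isl z' then dP (piZ z) (piZ z') else Dl (piZ z) (piZ z'))"
definition "h2 b = (if b \<in> g2 ` XC then Inl (g1 (inv_into XC g2 b)) else Inr b)"

lemma h2_g2: "x \<in> XC \<Longrightarrow> h2 (g2 x) = Inl (g1 x)"
  unfolding h2_def using injs(2) by auto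

lemma piZ_h2: "b \<in> Y2C \<Longrightarrow> piZ (h2 b) = f2 b"
  unfolding h2_def piZ_def using comm injs(2) by (auto simp: inv_into_f_f)

lemma piZ_h1: "piZ (Inl a) = f1 a" unfolding piZ_def by simp

lemma h2_in: "b \<in> Y2C \<Longrightarrow> h2 b \<in> AZ"
  unfolding h2_def AZ_def using maps_in(1) inv_into_into[of b g2 XC] by auto

lemma AZ_eq: "AZ = Inl ` Y1C \<union> h2 ` Y2C"
proof
  show "AZ \<subseteq> Inl ` Y1C \<union> h2 ` Y2C"
  proof
    fix z assume "z \<in> AZ"
    then consider a where "a \<in> Y1C" "z = Inl a" | b where "b \<in> Y2C" "b \<notin> g2 ` XC" "z = Inr b"
      unfolding AZ_def by auto
    then show "z \<in> Inl ` Y1C \<union> h2 ` Y2C"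
    proof cases
      case 1 then show ?thesis by auto
    next
      case 2 then have "h2 b = z" unfolding h2_def by auto
      then show ?thesis using 2 by blast
    qed
  qed
  show "Inl ` Y1C \<union> h2 ` Y2C \<subseteq> AZ" using h2_in unfolding AZ_def by auto
qed

lemma piZ_in: "z \<in> AZ \<Longrightarrow> piZ z \<in> PC"
  unfolding AZ_def piZ_def using maps_in by auto

lemma topspace_TT: "topspace TT = PC \<times> UNIV"
  unfolding TT_def carrier_of_def by (simp add: topspace_prod_topology)

lemma topspace_TZ: "topspace TZ = AZ"
  unfolding TZ_def topspace_pullback_topology topspace_TT eZ_def using piZ_in by auto

lemma cont_h1: "continuous_map (fst Y1) TZ Inl"
  unfolding TZ_def
proof (rule continuous_map_pullback')
  have "continuous_map (fst Y1) TT (\<lambda>a. (f1 a, \<lambda>\<psi>. 0))"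
    unfolding TT_def
    by (intro continuous_map_pairedI conts(3)) (simp add: continuous_map_componentwise_UNIV)
  then show "continuous_map (fst Y1) TT (eZ \<circ> Inl)"
    by (simp add: eZ_def piZ_def o_def)
  show "topspace (fst Y1) \<subseteq> Inl -` AZ" unfolding AZ_def carrier_of_def by auto
qed

lemma cont_h2: "continuous_map (fst Y2) TZ h2"
  unfolding TZ_def
proof (rule continuous_map_pullback')
  have "continuous_map (fst Y2) TT (\<lambda>b. (f2 b, \<lambda>\<psi>. if \<psi> \<in> Psi then \<psi> b else 0))"
    unfolding TT_def
  proof (intro continuous_map_pairedI conts(4))
    show "continuous_map (fst Y2) (product_topology (\<lambda>_. euclideanreal) UNIV)
            (\<lambda>b \<psi>. if \<psi> \<in> Psi then \<psi> b else 0)"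
      unfolding continuous_map_componentwise_UNIV
    proof
      fix \<psi> :: "'y2 \<Rightarrow> real"
      show "continuous_map (fst Y2) euclideanreal (\<lambda>b. if \<psi> \<in> Psi then \<psi> b else 0)"
        by (cases "\<psi> \<in> Psi") (auto simp: Psi_def)
    qed
  qed
  then show "continuous_map (fst Y2) TT (eZ \<circ> h2)"
  proof (rule continuous_map_eq)
    fix b assume b: "b \<in> topspace (fst Y2)"
    show "(f2 b, \<lambda>\<psi>. if \<psi> \<in> Psi then \<psi> b else 0) = (eZ \<circ> h2) b"
    proof (cases "b \<in> g2 ` XC")
      case True
      then obtain x where x: "x \<in> XC" "b = g2 x" by auto
      then have "\<And>\<psi>. \<psi> \<in> Psi \<Longrightarrow> \<psi> b = 0" unfolding Psi_def by auto
      then show ?thesis using x h2_g2 comm by (auto simp: eZ_def piZ_def fun_eq_iff)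
    next
      case False
      then show ?thesis by (simp add: h2_def eZ_def piZ_def)
    qed
  qed
  show "topspace (fst Y2) \<subseteq> h2 -` AZ" using h2_in unfolding carrier_of_def by auto
qed

lemma compact_TZ: "compact_space TZ"
proof -
  have "compactin TZ (Inl ` Y1C)"
    using image_compactin[OF cpt(2)[unfolded compact_space_def] cont_h1] by (simp add: carrier_of_def)
  moreover have "compactin TZ (h2 ` Y2C)"
    using image_compactin[OF cpt(3)[unfolded compact_space_def] cont_h2] by (simp add: carrier_of_def)
  ultimately show ?thesis unfolding compact_space_def topspace_TZ AZ_eq by (rule compactin_Un)
qed

lemma g2X_closed: "closedin (fst Y2) (g2 ` XC)"
proof -
  have "compactin (fst Y2) (g2 ` XC)"
    using image_compactin[OF cpt(1)[unfolded compact_space_def] conts(2)] by (simp add: carrier_of_def)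
  then show ?thesis using compactin_imp_closedin haus(3) by blast
qed

lemma inj_eZ: "inj_on eZ AZ"
proof (rule inj_onI)
  fix z z' assume z: "z \<in> AZ" and z': "z' \<in> AZ" and eq: "eZ z = eZ z'"
  then have peq: "piZ z = piZ z'" unfolding eZ_def by simp
  have sep: False if a: "a \<in> Y1C" and b: "b \<in> Y2C" "b \<notin> g2 ` XC" and e: "eZ (Inl a) = eZ (Inr b)" for a b
  proof -
    have "normal_space (fst Y2)" using cpt(3) haus(3) compact_Hausdorff_or_regular_imp_normal_space by blast
    moreover have "closedin (fst Y2) {b}" using closedin_Hausdorff_singleton haus(3) b(1)
      by (simp add: carrier_of_def)
    moreover have "disjnt (g2 ` XC) {b}" using b by auto
    ultimately obtain \<psi> where psi: "continuous_map (fst Y2) euclideanreal \<psi>" "\<psi> ` (g2 ` XC) \<subseteq> {0}" "\<psi> ` {b} \<subseteq> {1}"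
      using Urysohn_lemma_alt[of "fst Y2" "g2 ` XC" "{b}" 0 1] g2X_closed by blast
    then have "\<psi> \<in> Psi" unfolding Psi_def by auto
    moreover have "\<psi> b = 1" using psi by auto
    moreover have "(\<lambda>\<psi>::'y2\<Rightarrow>real. 0::real) = (\<lambda>\<psi>. if \<psi> \<in> Psi then \<psi> b else 0)"
      using e unfolding eZ_def by simp
    ultimately show False by (metis zero_neq_one)
  qed
  show "z = z'"
  proof (cases z)
    case (Inl a)
    then have a: "a \<in> Y1C" using z unfolding AZ_def by auto
    show ?thesis
    proof (cases z')
      case (Inl a')
      then have "a' \<in> Y1C" using z' unfolding AZ_def by auto
      then show ?thesis using a peq Inl \<open>z = Inl a\<close> injs(3) by (auto simp: piZ_def dest: inj_onD)
    next
      case (Inr b)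
      then have "b \<in> Y2C" "b \<notin> g2 ` XC" using z' unfolding AZ_def by auto
      then show ?thesis using sep a eq Inr \<open>z = Inl a\<close> by blast
    qed
  next
    case (Inr b)
    then have b: "b \<in> Y2C" "b \<notin> g2 ` XC" using z unfolding AZ_def by auto
    show ?thesis
    proof (cases z')
      case (Inl a')
      then have "a' \<in> Y1C" using z' unfolding AZ_def by auto
      then show ?thesis using sep b eq Inl \<open>z = Inr b\<close> by metis
    next
      case (Inr b')
      then have "b' \<in> Y2C" using z' unfolding AZ_def by auto
      then show ?thesis using b peq Inr \<open>z = Inr b\<close> injs(4) by (auto simp: piZ_def dest: inj_onD)
    qed
  qed
qed

lemma Hausdorff_TT: "Hausdorff_space TT"
  unfolding TT_def using haus(4)
  by (simp add: Hausdorff_space_prod_topology Hausdorff_space_product_topology)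

lemma Hausdorff_TZ: "Hausdorff_space TZ"
  unfolding TZ_def by (rule Hausdorff_pullback[OF Hausdorff_TT inj_eZ])

end

context amal begin

lemma isl_h2: "isl (h2 b) \<longleftrightarrow> b \<in> g2 ` XC"
  unfolding h2_def by auto

lemma DZ_11: "a \<in> Y1C \<Longrightarrow> a' \<in> Y1C \<Longrightarrow> DZ (Inl a) (Inl a') = snd Y1 a a'"
  unfolding DZ_def piZ_def using isos(3) by simp

lemma DZ_22: assumes "b \<in> Y2C" "b' \<in> Y2C" shows "DZ (h2 b) (h2 b') = snd Y2 b b'"
proof -
  have "DZ (h2 b) (h2 b') = dP (f2 b) (f2 b')"
  proof (cases "isl (h2 b) = isl (h2 b')")
    case True then show ?thesis unfolding DZ_def using piZ_h2 assms by simp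
  next
    case False
    then have "f2 b \<in> R \<or> f2 b' \<in> R" using R_alt(1) isl_h2 by auto
    then show ?thesis unfolding DZ_def using False piZ_h2 assms Dl_R maps_in(4) by simp
  qed
  then show ?thesis using isos(4) assms by simp
qed

lemma DZ_12: assumes "a \<in> Y1C" "b \<in> Y2C" shows "DZ (Inl a) (h2 b) = Dl (f1 a) (f2 b)"
proof (cases "b \<in> g2 ` XC")
  case True
  then have "f2 b \<in> R" using R_alt(1) by auto
  then show ?thesis unfolding DZ_def using True isl_h2 piZ_h2 assms Dl_R maps_in piZ_h1 by simp
next
  case False
  then show ?thesis unfolding DZ_def using isl_h2 piZ_h2 assms piZ_h1 by simp
qed

lemma DZ_21: assumes "a \<in> Y1C" "b \<in> Y2C" shows "DZ (h2 b) (Inl a) = Dl (f2 b) (f1 a)"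
proof (cases "b \<in> g2 ` XC")
  case True
  then have "f2 b \<in> R" using R_alt(1) by auto
  then show ?thesis unfolding DZ_def using True isl_h2 piZ_h2 assms Dl_R maps_in piZ_h1 by simp
next
  case False
  then show ?thesis unfolding DZ_def using isl_h2 piZ_h2 assms piZ_h1 by simp
qed

lemma DZ_refl: "z \<in> AZ \<Longrightarrow> DZ z z = 0"
  unfolding DZ_def using piZ_in dP_refl by simp

lemma DZ_tri: assumes "z \<in> AZ" "w \<in> AZ" "y \<in> AZ" shows "DZ z y \<le> DZ z w + DZ w y"
proof -
  have p: "piZ z \<in> PC" "piZ w \<in> PC" "piZ y \<in> PC" using piZ_in assms by auto
  note f = T1[OF p] T2[OF p] T3[OF p] dP_tri[OF p(1) p(2) p(3)]
  show ?thesis unfolding DZ_def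
    by (cases "isl z"; cases "isl w"; cases "isl y") (use f in auto)
qed

lemma not_isl_R: "z \<in> AZ \<Longrightarrow> \<not> isl z \<Longrightarrow> piZ z \<notin> R"
proof
  assume z: "z \<in> AZ" "\<not> isl z" "piZ z \<in> R"
  then obtain b where b: "z = Inr b" "b \<in> Y2C" "b \<notin> g2 ` XC" unfolding AZ_def by auto
  then obtain x where x: "x \<in> XC" "f2 b = f1 (g1 x)" using z unfolding R_def piZ_def by auto
  then have "f2 b = f2 (g2 x)" using comm by simp
  then have "b = g2 x" using injs(4) b(2) maps_in(2) x(1) by (meson inj_onD)
  then show False using b x by auto
qed

lemma AZ_same: assumes "z \<in> AZ" "z' \<in> AZ" "isl z = isl z'" "piZ z = piZ z'" shows "z = z'"
proof (cases z)
  case (Inl a)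
  then obtain a' where "z' = Inl a'" using assms(3) by (cases z') auto
  moreover have "a \<in> Y1C" "a' \<in> Y1C" using assms(1,2) Inl \<open>z' = Inl a'\<close> unfolding AZ_def by auto
  ultimately show ?thesis using Inl assms(4) injs(3) by (auto simp: piZ_def dest: inj_onD)
next
  case (Inr b)
  then obtain b' where "z' = Inr b'" using assms(3) by (cases z') auto
  moreover have "b \<in> Y2C" "b' \<in> Y2C" using assms(1,2) Inr \<open>z' = Inr b'\<close> unfolding AZ_def by auto
  ultimately show ?thesis using Inr assms(4) injs(4) by (auto simp: piZ_def dest: inj_onD)
qed

lemma DZ_sep: assumes "z \<in> AZ" "z' \<in> AZ" "DZ z z' = 0" "DZ z' z = 0" shows "z = z'"
proof (cases "isl z = isl z'")
  case True
  then have "piZ z = piZ z'" using assms dP_sep piZ_in unfolding DZ_def by auto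
  then show ?thesis using AZ_same assms True by blast
next
  case False
  then have "piZ z = piZ z' \<and> piZ z \<in> R" using assms Dl_sep piZ_in unfolding DZ_def by auto
  then show ?thesis using not_isl_R assms False by (cases "isl z") auto
qed

end

context amal begin

lemma cpt_prod: "compact_space A \<Longrightarrow> compact_space B \<Longrightarrow> compact_space (prod_topology A B)"
  by (simp add: compact_space_prod_topology)

lemma uc_DZ: "upper_continuous TZ DZ"
  unfolding upper_continuous_def
proof
  fix u :: ennreal
  let ?T = "prod_topology TZ TZ"
  show "openin ?T {z \<in> topspace ?T. u < DZ (fst z) (snd z)}"
  proof (cases "u = top")
    case True then show ?thesis by simp
  next
    case utop: False
    let ?S = "{z \<in> topspace ?T. DZ (fst z) (snd z) \<le> u}"
    define C11 where "C11 = {z \<in> topspace (prod_topology (fst Y1) (fst Y1)). snd Y1 (fst z) (snd z) \<le> u}"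
    define C22 where "C22 = {z \<in> topspace (prod_topology (fst Y2) (fst Y2)). snd Y2 (fst z) (snd z) \<le> u}"
    define C12 where "C12 = {z \<in> topspace (prod_topology (fst Y1) (prod_topology (fst X) (fst Y2))).
        snd Y1 (fst z) (g1 (fst (snd z))) + snd Y2 (g2 (fst (snd z))) (snd (snd z)) \<le> u}"
    define C21 where "C21 = {z \<in> topspace (prod_topology (fst Y2) (prod_topology (fst X) (fst Y1))).
        snd Y2 (fst z) (g2 (fst (snd z))) + snd Y1 (g1 (fst (snd z))) (snd (snd z)) \<le> u}"
    define m11 where "m11 = (\<lambda>z::'y1 \<times> 'y1. (Inl (fst z) :: 'y1 + 'y2, Inl (snd z) :: 'y1 + 'y2))"
    define m22 where "m22 = (\<lambda>z::'y2 \<times> 'y2. (h2 (fst z), h2 (snd z)))"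
    define m12 where "m12 = (\<lambda>z::'y1 \<times> 'x \<times> 'y2. (Inl (fst z) :: 'y1 + 'y2, h2 (snd (snd z))))"
    define m21 where "m21 = (\<lambda>z::'y2 \<times> 'x \<times> 'y1. (h2 (fst z), Inl (snd (snd z)) :: 'y1 + 'y2))"
    have cY1: "continuous_map (prod_topology (fst Y1) B) TZ (\<lambda>z. Inl (fst z))" for B :: "'b topology"
      using continuous_map_compose[OF continuous_map_fst cont_h1] by (simp add: o_def)
    have cY2: "continuous_map (prod_topology (fst Y2) B) TZ (\<lambda>z. h2 (fst z))" for B :: "'b topology"
      using continuous_map_compose[OF continuous_map_fst cont_h2] by (simp add: o_def)
    have cY1s: "continuous_map (prod_topology B (fst Y1)) TZ (\<lambda>z. Inl (snd z))" for B :: "'b topology"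
      using continuous_map_compose[OF continuous_map_snd cont_h1] by (simp add: o_def)
    have cY2s: "continuous_map (prod_topology B (fst Y2)) TZ (\<lambda>z. h2 (snd z))" for B :: "'b topology"
      using continuous_map_compose[OF continuous_map_snd cont_h2] by (simp add: o_def)
    have sndsnd: "continuous_map (prod_topology A (prod_topology B C)) C (\<lambda>z. snd (snd z))"
      for A :: "'a topology" and B :: "'b topology" and C :: "'c topology"
      using continuous_map_compose[OF continuous_map_snd continuous_map_snd] by (simp add: o_def)
    have fstsnd: "continuous_map (prod_topology A (prod_topology B C)) B (\<lambda>z. fst (snd z))"
      for A :: "'a topology" and B :: "'b topology" and C :: "'c topology"
      using continuous_map_compose[OF continuous_map_snd continuous_map_fst] by (simp add: o_def)
    have cY1ss: "continuous_map (prod_topology A (prod_topology B (fst Y1))) TZ (\<lambda>z. Inl (snd (snd z)))"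
      for A :: "'a topology" and B :: "'b topology"
      using continuous_map_compose[OF sndsnd cont_h1] by (simp add: o_def)
    have cY2ss: "continuous_map (prod_topology A (prod_topology B (fst Y2))) TZ (\<lambda>z. h2 (snd (snd z)))"
      for A :: "'a topology" and B :: "'b topology"
      using continuous_map_compose[OF sndsnd cont_h2] by (simp add: o_def)
    have g1c: "continuous_map (prod_topology A (prod_topology (fst X) B)) (fst Y1) (\<lambda>z. g1 (fst (snd z)))"
      for A :: "'a topology" and B :: "'b topology"
      using continuous_map_compose[OF fstsnd conts(1)] by (simp add: o_def)
    have g2c: "continuous_map (prod_topology A (prod_topology (fst X) B)) (fst Y2) (\<lambda>z. g2 (fst (snd z)))"
      for A :: "'a topology" and B :: "'b topology"
      using continuous_map_compose[OF fstsnd conts(2)] by (simp add: o_def)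
    have lY1: "lsc (prod_topology (fst Y1) (fst Y1)) (\<lambda>z. snd Y1 (fst z) (snd z))"
      using ucs(2) upper_continuous_lsc by blast
    have lY2: "lsc (prod_topology (fst Y2) (fst Y2)) (\<lambda>z. snd Y2 (fst z) (snd z))"
      using ucs(3) upper_continuous_lsc by blast
    have k11: "compactin (prod_topology (fst Y1) (fst Y1)) C11"
      unfolding C11_def using lsc_closed[OF lY1] cpt_prod cpt(2) closedin_compact_space by blast
    have k22: "compactin (prod_topology (fst Y2) (fst Y2)) C22"
      unfolding C22_def using lsc_closed[OF lY2] cpt_prod cpt(3) closedin_compact_space by blast
    have k12: "compactin (prod_topology (fst Y1) (prod_topology (fst X) (fst Y2))) C12"
    proof -
      let ?A = "prod_topology (fst Y1) (prod_topology (fst X) (fst Y2))"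
      have "continuous_map ?A (prod_topology (fst Y1) (fst Y1)) (\<lambda>z. (fst z, g1 (fst (snd z))))"
        by (intro continuous_map_pairedI continuous_map_fst g1c)
      from lsc_comp[OF lY1 this] have l1: "lsc ?A (\<lambda>z. snd Y1 (fst z) (g1 (fst (snd z))))" by simp
      have "continuous_map ?A (prod_topology (fst Y2) (fst Y2)) (\<lambda>z. (g2 (fst (snd z)), snd (snd z)))"
        by (intro continuous_map_pairedI sndsnd g2c)
      from lsc_comp[OF lY2 this] have l2: "lsc ?A (\<lambda>z. snd Y2 (g2 (fst (snd z))) (snd (snd z)))" by simp
      have "closedin ?A C12" unfolding C12_def by (rule lsc_closed[OF lsc_add[OF l1 l2]])
      moreover have "compact_space ?A" using cpt by (intro cpt_prod) auto
      ultimately show ?thesis using closedin_compact_space by blast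
    qed
    have k21: "compactin (prod_topology (fst Y2) (prod_topology (fst X) (fst Y1))) C21"
    proof -
      let ?A = "prod_topology (fst Y2) (prod_topology (fst X) (fst Y1))"
      have "continuous_map ?A (prod_topology (fst Y2) (fst Y2)) (\<lambda>z. (fst z, g2 (fst (snd z))))"
        by (intro continuous_map_pairedI continuous_map_fst g2c)
      from lsc_comp[OF lY2 this] have l1: "lsc ?A (\<lambda>z. snd Y2 (fst z) (g2 (fst (snd z))))" by simp
      have "continuous_map ?A (prod_topology (fst Y1) (fst Y1)) (\<lambda>z. (g1 (fst (snd z)), snd (snd z)))"
        by (intro continuous_map_pairedI sndsnd g1c)
      from lsc_comp[OF lY1 this] have l2: "lsc ?A (\<lambda>z. snd Y1 (g1 (fst (snd z))) (snd (snd z)))" by simp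
      have "closedin ?A C21" unfolding C21_def by (rule lsc_closed[OF lsc_add[OF l1 l2]])
      moreover have "compact_space ?A" using cpt by (intro cpt_prod) auto
      ultimately show ?thesis using closedin_compact_space by blast
    qed
    have c11: "continuous_map (prod_topology (fst Y1) (fst Y1)) ?T m11"
      unfolding m11_def by (intro continuous_map_pairedI cY1 cY1s)
    have c22: "continuous_map (prod_topology (fst Y2) (fst Y2)) ?T m22"
      unfolding m22_def by (intro continuous_map_pairedI cY2 cY2s)
    have c12: "continuous_map (prod_topology (fst Y1) (prod_topology (fst X) (fst Y2))) ?T m12"
      unfolding m12_def by (intro continuous_map_pairedI cY1 cY2ss)
    have c21: "continuous_map (prod_topology (fst Y2) (prod_topology (fst X) (fst Y1))) ?T m21"
      unfolding m21_def by (intro continuous_map_pairedI cY2 cY1ss)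
    have tsT: "topspace ?T = AZ \<times> AZ" by (simp add: topspace_TZ)
    have Seq: "?S = m11 ` C11 \<union> m22 ` C22 \<union> m12 ` C12 \<union> m21 ` C21"
    proof
      show "m11 ` C11 \<union> m22 ` C22 \<union> m12 ` C12 \<union> m21 ` C21 \<subseteq> ?S"
      proof (intro Un_least)
        show "m11 ` C11 \<subseteq> ?S"
          using DZ_11 unfolding C11_def m11_def tsT by (auto simp: AZ_def carrier_of_def)
        show "m22 ` C22 \<subseteq> ?S"
          using DZ_22 h2_in unfolding C22_def m22_def tsT by (auto simp: carrier_of_def)
        show "m12 ` C12 \<subseteq> ?S"
        proof
          fix w assume "w \<in> m12 ` C12"
          then obtain a x b where z: "(a, x, b) \<in> C12" "w = (Inl a, h2 b)" unfolding m12_def by auto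
          then have abx: "a \<in> Y1C" "x \<in> XC" "b \<in> Y2C" "snd Y1 a (g1 x) + snd Y2 (g2 x) b \<le> u"
            unfolding C12_def by (auto simp: carrier_of_def)
          have "DZ (Inl a) (h2 b) = Dl (f1 a) (f2 b)" using DZ_12 abx by simp
          also have "\<dots> \<le> dP (f1 a) (f1 (g1 x)) + dP (f1 (g1 x)) (f2 b)" using Dl_le R_alt abx by blast
          also have "\<dots> = snd Y1 a (g1 x) + snd Y2 (g2 x) b"
            using isos(3,4) maps_in abx comm by simp
          finally have "DZ (Inl a) (h2 b) \<le> u" using abx by simp
          then show "w \<in> ?S" using z abx h2_in tsT unfolding AZ_def by auto
        qed
        show "m21 ` C21 \<subseteq> ?S"
        proof
          fix w assume "w \<in> m21 ` C21"
          then obtain a x b where z: "(b, x, a) \<in> C21" "w = (h2 b, Inl a)" unfolding m21_def by auto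
          then have abx: "a \<in> Y1C" "x \<in> XC" "b \<in> Y2C" "snd Y2 b (g2 x) + snd Y1 (g1 x) a \<le> u"
            unfolding C21_def by (auto simp: carrier_of_def)
          have "DZ (h2 b) (Inl a) = Dl (f2 b) (f1 a)" using DZ_21 abx by simp
          also have "\<dots> \<le> dP (f2 b) (f1 (g1 x)) + dP (f1 (g1 x)) (f1 a)" using Dl_le R_alt abx by blast
          also have "\<dots> = snd Y2 b (g2 x) + snd Y1 (g1 x) a"
            using isos(3,4) maps_in abx comm by simp
          finally have "DZ (h2 b) (Inl a) \<le> u" using abx by simp
          then show "w \<in> ?S" using z abx h2_in tsT unfolding AZ_def by auto
        qed
      qed
      show "?S \<subseteq> m11 ` C11 \<union> m22 ` C22 \<union> m12 ` C12 \<union> m21 ` C21"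
      proof
        fix w assume w: "w \<in> ?S"
        have w1: "w \<in> topspace ?T" and wu: "DZ (fst w) (snd w) \<le> u" using w by simp_all
        have wA: "fst w \<in> AZ" "snd w \<in> AZ" using w1 unfolding tsT by (simp_all add: mem_Times_iff)
        have Rne: "R \<noteq> {}" if "Dl p q \<le> u" for p q using that utop Dl_empty top_unique by metis
        consider a a' where "a \<in> Y1C" "a' \<in> Y1C" "w = (Inl a, Inl a')"
          | a b where "a \<in> Y1C" "b \<in> Y2C" "w = (Inl a, h2 b)"
          | a b where "a \<in> Y1C" "b \<in> Y2C" "w = (h2 b, Inl a)"
          | b b' where "b \<in> Y2C" "b' \<in> Y2C" "w = (h2 b, h2 b')"
          using wA unfolding AZ_eq by (cases w) auto
        then show "w \<in> m11 ` C11 \<union> m22 ` C22 \<union> m12 ` C12 \<union> m21 ` C21"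
        proof cases
          case 1
          then have "(a, a') \<in> C11" using wu DZ_11 unfolding C11_def by (auto simp: carrier_of_def)
          then show ?thesis using 1 unfolding m11_def by (auto intro: rev_image_eqI)
        next
          case 4
          then have "(b, b') \<in> C22" using wu DZ_22 unfolding C22_def by (auto simp: carrier_of_def)
          then show ?thesis using 4 unfolding m22_def by (auto intro: rev_image_eqI)
        next
          case 2
          then have le: "Dl (f1 a) (f2 b) \<le> u" using wu DZ_12 by simp
          then obtain r where r: "r \<in> R" "Dl (f1 a) (f2 b) = dP (f1 a) r + dP r (f2 b)"
            using Dl_attain[OF maps_in(3)[OF 2(1)] maps_in(4)[OF 2(2)] Rne[OF le]] by blast
          then obtain x where x: "x \<in> XC" "r = f1 (g1 x)" unfolding R_def by auto
          have "dP (f1 a) r + dP r (f2 b) = snd Y1 a (g1 x) + snd Y2 (g2 x) b"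
            using x isos(3,4) maps_in 2 comm by simp
          then have "(a, x, b) \<in> C12" using le r x 2 unfolding C12_def by (auto simp: carrier_of_def)
          then show ?thesis using 2 unfolding m12_def by (auto intro: rev_image_eqI)
        next
          case 3
          then have le: "Dl (f2 b) (f1 a) \<le> u" using wu DZ_21 by simp
          then obtain r where r: "r \<in> R" "Dl (f2 b) (f1 a) = dP (f2 b) r + dP r (f1 a)"
            using Dl_attain[OF maps_in(4)[OF 3(2)] maps_in(3)[OF 3(1)] Rne[OF le]] by blast
          then obtain x where x: "x \<in> XC" "r = f1 (g1 x)" unfolding R_def by auto
          have "dP (f2 b) r + dP r (f1 a) = snd Y2 b (g2 x) + snd Y1 (g1 x) a"
            using x isos(3,4) maps_in 3 comm by simp
          then have "(b, x, a) \<in> C21" using le r x 3 unfolding C21_def by (auto simp: carrier_of_def)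
          then show ?thesis using 3 unfolding m21_def by (auto intro: rev_image_eqI)
        qed
      qed
    qed
    have "compactin ?T ?S"
      unfolding Seq
      by (intro compactin_Un image_compactin[OF k11 c11] image_compactin[OF k22 c22]
          image_compactin[OF k12 c12] image_compactin[OF k21 c21])
    moreover have "Hausdorff_space ?T" using Hausdorff_TZ by (simp add: Hausdorff_space_prod_topology)
    ultimately have "closedin ?T ?S" using compactin_imp_closedin by blast
    then have "openin ?T (topspace ?T - ?S)" by (meson closedin_def)
    moreover have "{z \<in> topspace ?T. u < DZ (fst z) (snd z)} = topspace ?T - ?S" by auto
    ultimately show ?thesis by (simp only:)
  qed
qed

end

context amal begin

lemma objZ: "MetCH_sep_obj (TZ, DZ)"
  unfolding MetCH_sep_obj_def carrier_of_def is_metric_on_def separated_on_def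
  using compact_TZ Hausdorff_TZ uc_DZ DZ_refl DZ_tri DZ_sep by (simp add: topspace_TZ)

lemma mor_h1: "MetCH_sep_mor Y1 (TZ, DZ) Inl"
  unfolding MetCH_sep_mor_def using objs(2) objZ cont_h1 DZ_11 by simp

lemma mor_h2: "MetCH_sep_mor Y2 (TZ, DZ) h2"
  unfolding MetCH_sep_mor_def using objs(3) objZ cont_h2 DZ_22 by simp

lemma key:
  assumes po: "is_pushout TYPE('y1 + 'y2) X Y1 Y2 P g1 g2 f1 f2"
    and a: "a \<in> Y1C" and b: "b \<in> Y2C" and eq: "f1 a = f2 b"
  shows "\<exists>x\<in>XC. g1 x = a \<and> g2 x = b"
proof (cases "b \<in> g2 ` XC")
  case True
  then obtain x where x: "x \<in> XC" "b = g2 x" by auto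
  then have "f1 a = f1 (g1 x)" using eq comm by simp
  then have "a = g1 x" using injs(3) a maps_in(1)[OF x(1)] by (meson inj_onD)
  then show ?thesis using x by auto
next
  case False
  have cocone: "\<forall>x\<in>XC. Inl (g1 x) = h2 (g2 x)" using h2_g2 by simp
  from po have "\<forall>(Z::('y1 + 'y2) metch) h1 h2.
        MetCH_sep_mor Y1 Z h1 \<and> MetCH_sep_mor Y2 Z h2 \<and>
        (\<forall>x\<in>XC. h1 (g1 x) = h2 (g2 x)) \<longrightarrow>
        (\<exists>u. MetCH_sep_mor P Z u \<and>
             (\<forall>y\<in>Y1C. u (f1 y) = h1 y) \<and>
             (\<forall>y\<in>Y2C. u (f2 y) = h2 y) \<and>
             (\<forall>v. MetCH_sep_mor P Z v \<and>
                  (\<forall>y\<in>Y1C. v (f1 y) = h1 y) \<and>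
                  (\<forall>y\<in>Y2C. v (f2 y) = h2 y) \<longrightarrow>
                  (\<forall>p\<in>PC. v p = u p)))"
    unfolding is_pushout_def by blast
  then have "\<exists>u. (\<forall>y\<in>Y1C. u (f1 y) = Inl y) \<and> (\<forall>y\<in>Y2C. u (f2 y) = h2 y)"
    using mor_h1 mor_h2 cocone by blast
  then obtain u where u: "\<forall>y\<in>Y1C. u (f1 y) = Inl y" "\<forall>y\<in>Y2C. u (f2 y) = h2 y" by blast
  have "Inl a = u (f1 a)" using u a by simp
  also have "\<dots> = u (f2 b)" using eq by simp
  also have "\<dots> = h2 b" using u b by simp
  also have "\<dots> = Inr b" using False by (simp add: h2_def)
  finally show ?thesis by simp
qed

end

theorem lemma4p4:
  fixes X :: "'x metch" and Y1 :: "'y1 metch" and Y2 :: "'y2 metch" and P :: "'p metch"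
    and g1 :: "'x \<Rightarrow> 'y1" and g2 :: "'x \<Rightarrow> 'y2" and f1 :: "'y1 \<Rightarrow> 'p" and f2 :: "'y2 \<Rightarrow> 'p"
  assumes "MetCH_sep_embedding X Y1 g1" and "MetCH_sep_embedding X Y2 g2"
    and "MetCH_sep_embedding Y1 P f1" and "MetCH_sep_embedding Y2 P f2"
    and "is_pushout TYPE('y1 + 'y2) X Y1 Y2 P g1 g2 f1 f2"
  shows "is_pullback TYPE('w) X Y1 Y2 P g1 g2 f1 f2"
proof -
  have sq: "commuting_square X Y1 Y2 P g1 g2 f1 f2" using assms(5) unfolding is_pushout_def by blast
  then have comm: "\<And>x. x \<in> carrier_of X \<Longrightarrow> f1 (g1 x) = f2 (g2 x)"
    unfolding commuting_square_def by blast
  interpret A: amal X Y1 Y2 P g1 g2 f1 f2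
    using assms(1-4) comm by unfold_locales
  show ?thesis
    unfolding is_pullback_def
  proof (intro conjI sq allI impI)
    fix W :: "'w metch" and k1 k2
    assume k: "MetCH_sep_mor W Y1 k1 \<and> MetCH_sep_mor W Y2 k2 \<and> (\<forall>w\<in>carrier_of W. f1 (k1 w) = f2 (k2 w))"
    have ck1: "continuous_map (fst W) (fst Y1) k1" and ck2: "continuous_map (fst W) (fst Y2) k2"
      and objW: "MetCH_sep_obj W"
      using k unfolding MetCH_sep_mor_def by auto
    have ne1: "\<And>w w'. w \<in> carrier_of W \<Longrightarrow> w' \<in> carrier_of W \<Longrightarrow> snd Y1 (k1 w) (k1 w') \<le> snd W w w'"
      using k unfolding MetCH_sep_mor_def by auto
    have k1in: "\<And>w. w \<in> carrier_of W \<Longrightarrow> k1 w \<in> A.Y1C"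
      using ck1 continuous_map_image_subset_topspace unfolding carrier_of_def by blast
    have k2in: "\<And>w. w \<in> carrier_of W \<Longrightarrow> k2 w \<in> A.Y2C"
      using ck2 continuous_map_image_subset_topspace unfolding carrier_of_def by blast
    have ex: "\<And>w. w \<in> carrier_of W \<Longrightarrow> \<exists>x\<in>A.XC. g1 x = k1 w \<and> g2 x = k2 w"
      using A.key[OF assms(5)] k1in k2in k by blast
    define u where "u = (\<lambda>w. inv_into A.XC g1 (k1 w))"
    have uX: "\<And>w. w \<in> carrier_of W \<Longrightarrow> u w \<in> A.XC \<and> g1 (u w) = k1 w \<and> g2 (u w) = k2 w"
    proof -
      fix w assume w: "w \<in> carrier_of W"
      then obtain x where x: "x \<in> A.XC" "g1 x = k1 w" "g2 x = k2 w" using ex by blast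
      have "u w = x" unfolding u_def using x A.injs(1) by (metis inv_into_f_f)
      then show "u w \<in> A.XC \<and> g1 (u w) = k1 w \<and> g2 (u w) = k2 w" using x by simp
    qed
    have cu: "continuous_map (fst W) (fst X) u"
    proof -
      have "continuous_map (subtopology (fst Y1) (g1 ` A.XC)) (fst X) (inv_into A.XC g1)"
        by (rule continuous_inverse_map[OF A.cpt(1) A.haus(2) A.conts(1)])
           (auto simp: carrier_of_def inv_into_f_f[OF A.injs(1)[unfolded carrier_of_def]])
      moreover have "continuous_map (fst W) (subtopology (fst Y1) (g1 ` A.XC)) k1"
        unfolding continuous_map_in_subtopology
      proof
        show "k1 \<in> topspace (fst W) \<rightarrow> g1 ` A.XC" using uX unfolding carrier_of_def by force
      qed (rule ck1)
      ultimately show ?thesis unfolding u_def using continuous_map_compose by (metis comp_apply continuous_map_eq)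
    qed
    have mu: "MetCH_sep_mor W X u"
      unfolding MetCH_sep_mor_def
    proof (intro conjI objW A.objs(1) cu ballI)
      fix w w' assume w: "w \<in> carrier_of W" "w' \<in> carrier_of W"
      have "snd X (u w) (u w') = snd Y1 (g1 (u w)) (g1 (u w'))" using A.isos(1) uX w by blast
      also have "\<dots> = snd Y1 (k1 w) (k1 w')" using uX w by simp
      also have "\<dots> \<le> snd W w w'" using ne1 w by blast
      finally show "snd X (u w) (u w') \<le> snd W w w'" .
    qed
    show "\<exists>u. MetCH_sep_mor W X u \<and>
             (\<forall>w\<in>carrier_of W. g1 (u w) = k1 w) \<and>
             (\<forall>w\<in>carrier_of W. g2 (u w) = k2 w) \<and>
             (\<forall>v. MetCH_sep_mor W X v \<and>
                  (\<forall>w\<in>carrier_of W. g1 (v w) = k1 w) \<and>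
                  (\<forall>w\<in>carrier_of W. g2 (v w) = k2 w) \<longrightarrow>
                  (\<forall>w\<in>carrier_of W. v w = u w))"
    proof (intro exI[of _ u] conjI mu ballI allI impI)
      fix w assume "w \<in> carrier_of W" then show "g1 (u w) = k1 w" using uX by blast
    next
      fix w assume "w \<in> carrier_of W" then show "g2 (u w) = k2 w" using uX by blast
    next
      fix v w
      assume v: "MetCH_sep_mor W X v \<and> (\<forall>w\<in>carrier_of W. g1 (v w) = k1 w) \<and> (\<forall>w\<in>carrier_of W. g2 (v w) = k2 w)"
        and w: "w \<in> carrier_of W"
      have "v w \<in> A.XC" using v w continuous_map_image_subset_topspace
        unfolding MetCH_sep_mor_def carrier_of_def by blast
      moreover have "g1 (v w) = g1 (u w)" using v w uX by simp
      ultimately show "v w = u w" using uX w A.injs(1) by (meson inj_onD)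
    qed
  qed
qed

end
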